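(* Let $f:[0,1]^n\to\mathbb{R}$ be a measurable, bounded, positive function, let $$F(x_1,\dots,x_n)=\int_0^{x_1}\cdots\int_0^{x_n}f(t_1,\dots,t_n)\,dt_1\cdots dt_n,$$ and assume $F(1,\dots,1)=1$. Then the projection onto $\mathbb{R}^{n-1}$ (onto the first $n-1$ coordinates) of the level set $\mathcal{D}=\{(x_1,\dots,x_n)\in[0,1]^n: F(x_1,\dots,x_n)=1/2\}$ is a Jordan measurable set of nonzero Lebesgue measure. *)

theory Defs
  imports "HOL-Analysis.Analysis"
begin

definition jordan_measurable :: "'a::euclidean_space set \<Rightarrow> bool" where
  "jordan_measurable S \<longleftrightarrow> bounded S \<and> negligible (frontier S)"

end

theory Submission
  imports Defs
begin

lemma One_vec_nth [simp]: "(One::real^'n) $ i = 1"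
proof -
  have "(One::real^'n) $ i = One \<bullet> axis i (1::real)" by (rule cart_eq_inner_axis)
  also have "\<dots> = 1" by (simp add: inner_sum_left inner_Basis sum.delta' )
  finally show ?thesis .
qed

lemma One_vec_nth' [simp]: "(\<Sum>x\<in>(Basis::(real^'n) set). x $ i) = 1"
  using One_vec_nth[of i] by (simp del: One_vec_nth)

lemma One_pair: "(One :: (real^'m) \<times> real) = (One, 1)"
proof -
  have "(One :: (real^'m) \<times> real) = (\<Sum>i\<in>Basis. (i, 0::real)) + (\<Sum>i\<in>Basis. (0::real^'m, i))"
    by (rule sum_Basis_prod_eq[of "\<lambda>x. x", simplified])
  also have "\<dots> = (One, 1)" by (simp add: prod_eq_iff fst_sum snd_sum)
  finally show ?thesis .
qed

lemma integral_pos_aux: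
  fixes f :: "'a::euclidean_space \<Rightarrow> real"
  assumes f: "f absolutely_integrable_on S" and S: "S \<in> lmeasurable"
    and pos: "\<And>x. x\<in>S \<Longrightarrow> 0 < f x" and m: "measure lebesgue S > 0"
  shows "integral S f > 0"
proof -
  have S': "S \<in> sets lebesgue" using S by auto
  have int: "integrable (lebesgue_on S) f"
    using f S' unfolding set_integrable_def by (simp add: integrable_restrict_space)
  have eq: "integral\<^sup>L (lebesgue_on S) f = integral S f" by (rule lebesgue_integral_eq_integral[OF int S'])
  have ge: "integral S f \<ge> 0"
    using f pos by (meson absolutely_integrable_on_def integral_nonneg less_imp_le)
  show ?thesis
  proof (rule ccontr)
    assume "\<not> ?thesis" then have "integral\<^sup>L (lebesgue_on S) f = 0" using ge eq by auto
    moreover have "AE x in lebesgue_on S. 0 \<le> f x"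
      using pos by (intro AE_I2) (auto simp: space_restrict_space less_imp_le)
    ultimately have "AE x in lebesgue_on S. f x = 0"
      using integral_nonneg_eq_0_iff_AE[OF int] by simp
    moreover have "{x\<in>space (lebesgue_on S). \<not> f x = 0} = S"
      using pos by (auto simp: space_restrict_space) (metis less_irrefl)
    ultimately have "emeasure (lebesgue_on S) S = 0"
      using AE_iff_measurable[of S "lebesgue_on S"] S'
      by (metis sets.top space_restrict_space2)
    then have "emeasure lebesgue S = 0"
      using S' by (simp add: emeasure_restrict_space)
    then show False using m by (simp add: measure_def)
  qed
qed

lemma int_diff_aux:
  fixes f :: "'a::euclidean_space \<Rightarrow> real"
  assumes fm: "f \<in> borel_measurable (lebesgue_on C)"
    and bd: "\<And>x. x\<in>C \<Longrightarrow> 0 < f x \<and> f x \<le> Bd"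
    and ST: "S \<subseteq> T" "T \<subseteq> C" and Sm: "S \<in> lmeasurable" and Tm: "T \<in> lmeasurable"
  shows "integral T f - integral S f \<le> Bd * (measure lebesgue T - measure lebesgue S)"
    and "0 \<le> integral T f - integral S f"
    and "measure lebesgue S < measure lebesgue T \<Longrightarrow> 0 < integral T f - integral S f"
proof -
  have ai: "f absolutely_integrable_on U" if "U \<subseteq> C" "U \<in> lmeasurable" for U
  proof (rule measurable_bounded_by_integrable_imp_absolutely_integrable[where g="\<lambda>_. Bd"])
    show "f \<in> borel_measurable (lebesgue_on U)"
      using fm measurable_restrict_mono that(1) by blast
    show "U \<in> sets lebesgue" using that by auto
    show "(\<lambda>_. Bd) integrable_on U" using that integrable_on_const by blast
    show "norm (f x) \<le> Bd" if "x \<in> U" for x using bd \<open>U \<subseteq> C\<close> that by force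
  qed
  have D: "T - S \<in> lmeasurable" using Sm Tm by auto
  have aS: "f absolutely_integrable_on S" and aT: "f absolutely_integrable_on T"
    and aD: "f absolutely_integrable_on (T - S)"
    using ai[of S] ai[of T] ai[of "T-S"] ST Sm Tm D by auto
  have "(f has_integral (integral S f + integral (T - S) f)) (S \<union> (T - S))"
    by (rule has_integral_Un) (use aS aD in \<open>auto simp: absolutely_integrable_on_def\<close>)
  moreover have "S \<union> (T - S) = T" using ST by auto
  ultimately have eq: "integral T f - integral S f = integral (T - S) f"
    by (metis add_diff_cancel_left' integral_unique)
  have mD: "measure lebesgue (T - S) = measure lebesgue T - measure lebesgue S"
    using Sm Tm ST by (simp add: measurable_measure_Diff)
  have "integral (T - S) f \<le> integral (T - S) (\<lambda>_. Bd)"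
    using aD D ST bd by (intro integral_le) (auto simp: absolutely_integrable_on_def integrable_on_const)
  also have "\<dots> = Bd * measure lebesgue (T - S)"
    using D integral_mult_right[of "T-S" Bd "\<lambda>_. 1::real"] by (simp add: lmeasure_integral)
  finally show "integral T f - integral S f \<le> Bd * (measure lebesgue T - measure lebesgue S)"
    using eq mD by simp
  show "0 \<le> integral T f - integral S f"
  proof -
    have "0 \<le> integral (T-S) f"
    proof (rule integral_nonneg)
      show "f integrable_on T - S" using aD by (simp add: absolutely_integrable_on_def)
      show "0 \<le> f x" if "x \<in> T - S" for x using bd[of x] ST that by force
    qed
    then show ?thesis using eq by simp
  qed
  show "0 < integral T f - integral S f" if "measure lebesgue S < measure lebesgue T"
    using eq integral_pos_aux[OF aD D] bd ST mD that by auto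
qed



lemma meas_box:
  fixes a :: "real^'m" and t :: real
  assumes "\<forall>i. 0 \<le> a$i" "0 \<le> t"
  shows "measure lebesgue (cbox (0::(real^'m) \<times> real) (a,t)) = (\<Prod>i\<in>UNIV. a$i) * t"
proof -
  have "measure lebesgue (cbox (0::(real^'m) \<times> real) (a,t)) = Henstock_Kurzweil_Integration.content (cbox (0::(real^'m) \<times> real) (a,t))"
    by simp
  also have "\<dots> = Henstock_Kurzweil_Integration.content (cbox (0::real^'m) a) * t"
    using assms by (simp add: zero_prod_def content_Pair)
  also have "a \<in> cbox 0 a" using assms by (simp add: mem_box_cart)
  then have "Henstock_Kurzweil_Integration.content (cbox (0::real^'m) a) = (\<Prod>i\<in>UNIV. a$i)"
    by (subst content_cbox_cart) auto
  finally show ?thesis by simp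
qed

lemma sub_box:
  fixes a a' :: "real^'m" and t t' :: real
  assumes "\<forall>i. a$i \<le> a'$i" "t \<le> t'"
  shows "cbox (0::(real^'m) \<times> real) (a,t) \<subseteq> cbox 0 (a',t')"
  using assms by (auto simp: zero_prod_def mem_box_cart cbox_Pair_eq) (metis order_trans)

lemma memC:
  fixes a :: "real^'m" and t :: real
  shows "(a,t) \<in> cbox (0::(real^'m) \<times> real) One \<longleftrightarrow> (\<forall>i. 0 \<le> a$i \<and> a$i \<le> 1) \<and> 0 \<le> t \<and> t \<le> 1"
  by (simp add: One_pair zero_prod_def mem_box_cart)

theorem theorem5p3:
  fixes f :: "(real ^ 'm) \<times> real \<Rightarrow> real"
    and F :: "(real ^ 'm) \<times> real \<Rightarrow> real"
  assumes meas: "f \<in> borel_measurable (lebesgue_on (cbox 0 One))"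
    and bdd: "\<exists>B. \<forall>x\<in>cbox 0 One. \<bar>f x\<bar> \<le> B"
    and pos: "\<forall>x\<in>cbox 0 One. f x > 0"
    and F_def: "\<forall>x\<in>cbox 0 One. F x = integral (cbox 0 x) f"
    and F_one: "F One = 1"
  shows "jordan_measurable (fst ` {x \<in> cbox 0 One. F x = 1/2})
       \<and> measure lebesgue (fst ` {x \<in> cbox 0 One. F x = 1/2}) > 0"
proof -
  define C where "C = cbox (0::(real^'m) \<times> real) One"
  define K where "K = cbox (0::real^'m) One"
  define mu where "mu a t = (\<Prod>i\<in>UNIV. (a::real^'m)$i) * (t::real)" for a t
  obtain Bd where Bd: "\<And>x. x \<in> C \<Longrightarrow> 0 < f x \<and> f x \<le> Bd"
    using bdd pos unfolding C_def by (metis abs_le_D1)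
  have OneC: "(One, 1) \<in> C" by (simp add: C_def memC)
  have Bd0: "0 < Bd" using Bd[OF OneC] by linarith
  have FOne: "F (One, 1) = 1" using F_one by (simp add: One_pair)
  have boxC: "cbox 0 (a,t) \<subseteq> C" if "(a,t) \<in> C" for a t
  proof -
    have "cbox 0 (a,t) \<subseteq> cbox 0 (One,1)"
      by (rule sub_box) (use that in \<open>auto simp: C_def memC\<close>)
    then show ?thesis by (simp add: C_def One_pair)
  qed
  have mono: "F (a,t) \<le> F (a',t') \<and> F (a',t') - F (a,t) \<le> Bd * (mu a' t' - mu a t)
      \<and> (mu a t < mu a' t' \<longrightarrow> F (a,t) < F (a',t'))"
    if C1: "(a,t) \<in> C" and C2: "(a',t') \<in> C" and le: "\<forall>i. a$i \<le> a'$i" "t \<le> t'" for a t a' t'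
  proof -
    have S: "cbox 0 (a,t) \<subseteq> cbox 0 (a',t')" by (rule sub_box[OF le])
    have nn: "\<forall>i. 0 \<le> a$i" "0 \<le> t" "\<forall>i. 0 \<le> a'$i" "0 \<le> t'"
      using C1 C2 by (auto simp: C_def memC)
    have mS: "measure lebesgue (cbox 0 (a,t)) = mu a t" "measure lebesgue (cbox 0 (a',t')) = mu a' t'"
      unfolding mu_def by (rule meas_box[OF nn(1,2)], rule meas_box[OF nn(3,4)])
    have FF: "F (a,t) = integral (cbox 0 (a,t)) f" "F (a',t') = integral (cbox 0 (a',t')) f"
      using F_def C1 C2 unfolding C_def by auto
    note I = int_diff_aux[OF meas[folded C_def] Bd S boxC[OF C2] lmeasurable_cbox lmeasurable_cbox]
    show ?thesis using I FF mS by auto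
  qed
  have contF: "continuous_on C F"
    unfolding continuous_on_def
  proof (intro ballI)
    fix x assume "x \<in> C"
    obtain a t where x: "x = (a,t)" by fastforce
    define g where "g z = Bd * ((\<Prod>i\<in>UNIV. max (a$i) (fst z$i)) * max t (snd z)
        - (\<Prod>i\<in>UNIV. min (a$i) (fst z$i)) * min t (snd z))" for z :: "(real^'m) \<times> real"
    have gx: "g x = 0" by (simp add: g_def x)
    have "(g \<longlongrightarrow> g x) (at x within C)"
      unfolding g_def by (intro tendsto_intros)
    then have g0: "(g \<longlongrightarrow> 0) (at x within C)" using gx by simp
    have bound: "norm (F z - F x) \<le> g z" if "z \<in> C" for z
    proof -
      obtain b s where z: "z = (b,s)" by fastforce
      define la where "la = (\<chi> i. min (a$i) (b$i))"
      define ha where "ha = (\<chi> i. max (a$i) (b$i))"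
      have aC: "(a,t) \<in> C" and bC: "(b,s) \<in> C" using \<open>x \<in> C\<close> that x z by auto
      have loC: "(la, min t s) \<in> C" and hiC: "(ha, max t s) \<in> C"
        using aC bC by (auto simp: C_def memC la_def ha_def min_le_iff_disj le_max_iff_disj)
      have m1: "F (la, min t s) \<le> F (b,s)" "F (b,s) \<le> F (ha, max t s)"
        "F (la, min t s) \<le> F (a,t)" "F (a,t) \<le> F (ha, max t s)"
        using mono[OF loC bC] mono[OF bC hiC] mono[OF loC aC] mono[OF aC hiC]
        by (auto simp: la_def ha_def)
      have m2: "F (ha, max t s) - F (la, min t s) \<le> Bd * (mu ha (max t s) - mu la (min t s))"
      proof -
        have le1: "\<forall>i. la$i \<le> ha$i" "min t s \<le> max t s"
          by (auto simp: la_def ha_def min_le_iff_disj)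
        show ?thesis using mono[OF loC hiC le1] by simp
      qed
      have "g z = Bd * (mu ha (max t s) - mu la (min t s))"
        by (simp add: g_def z mu_def la_def ha_def)
      then show ?thesis using m1 m2 x z by (simp add: abs_le_iff; linarith)
    qed
    have "((\<lambda>z. F z - F x) \<longlongrightarrow> 0) (at x within C)"
      by (rule Lim_null_comparison[OF _ g0])
         (use bound in \<open>auto simp: eventually_at_filter intro!: always_eventually\<close>)
    then show "(F \<longlongrightarrow> F x) (at x within C)" by (rule LIM_zero_cancel)
  qed
  define G where "G y = F (y, 1)" for y
  have yK: "(y,1) \<in> C \<longleftrightarrow> y \<in> K" for y by (simp add: C_def K_def memC mem_box_cart)
  have contG: "continuous_on K G"
    unfolding G_def
    by (rule continuous_on_compose2[OF contF]) (auto intro!: continuous_intros simp: yK)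
  define P where "P = fst ` {x \<in> C. F x = 1/2}"
  have F0: "F (y, 0) = 0" if "y \<in> K" for y
  proof -
    have "(y,0) \<in> C" using that by (simp add: C_def K_def memC mem_box_cart)
    then have "F (y,0) = integral (cbox 0 (y,0)) f" using F_def C_def by auto
    also have "\<dots> = 0" by (simp add: zero_prod_def content_Pair)
    finally show ?thesis .
  qed
  have Peq: "P = {y \<in> K. 1/2 \<le> G y}"
  proof (intro equalityI subsetI)
    fix y assume "y \<in> P"
    then obtain t where yt: "(y,t) \<in> C" "F (y,t) = 1/2" unfolding P_def by force
    have "y \<in> K" using yt by (simp add: C_def K_def memC mem_box_cart)
    moreover have "F (y,t) \<le> G y" unfolding G_def
      using mono[OF yt(1), of y 1] yt \<open>y \<in> K\<close> by (auto simp: yK C_def memC)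
    ultimately show "y \<in> {y \<in> K. 1/2 \<le> G y}" using yt by auto
  next
    fix y assume y: "y \<in> {y \<in> K. 1/2 \<le> G y}"
    have yC: "(y,t) \<in> C" if "0 \<le> t" "t \<le> 1" for t
      using y that by (simp add: C_def K_def memC mem_box_cart)
    have "continuous_on {0..1} (\<lambda>t. F (y,t))"
      by (rule continuous_on_compose2[OF contF]) (auto intro!: continuous_intros simp: yC)
    then obtain t where t: "0 \<le> t" "t \<le> 1" "F (y,t) = 1/2"
      using IVT'[of "\<lambda>t. F (y,t)" 0 "1/2" 1] F0 y by (auto simp: G_def)
    then show "y \<in> P" unfolding P_def using yC[OF t(1,2)] by force
  qed
  have closedP: "closed P"
  proof -
    have "P = K \<inter> G -` {1/2..}" using Peq by auto
    moreover have "closed (K \<inter> G -` {1/2..})"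
      by (rule continuous_closed_preimage[OF contG]) (auto simp: K_def)
    ultimately show ?thesis by simp
  qed
  have boundedP: "bounded P" using Peq by (metis (no_types, lifting) K_def bounded_cbox bounded_subset mem_Collect_eq subsetI)
  have lmP: "P \<in> lmeasurable" using closedP boundedP by (simp add: compact_eq_bounded_closed lmeasurable_compact)
  define L where "L = {y \<in> K. G y = 1/2}"
  have frontP: "frontier P \<subseteq> (cbox 0 One - box 0 One) \<union> L"
  proof
    fix y assume yf: "y \<in> frontier P"
    then have yP: "y \<in> P" using frontier_subset_closed[OF closedP] by auto
    show "y \<in> (cbox 0 One - box 0 One) \<union> L"
    proof (rule ccontr)
      assume "\<not> ?thesis"
      then have yb: "y \<in> box 0 One" and yG: "G y > 1/2" using yP Peq unfolding K_def L_def by auto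
      define U where "U = box 0 One \<inter> G -` {1/2<..}"
      have "continuous_on (box 0 One) G"
        using contG unfolding K_def by (rule continuous_on_subset) (rule box_subset_cbox)
      then have "open U" unfolding U_def by (intro continuous_open_preimage) auto
      moreover have "U \<subseteq> P" unfolding U_def Peq K_def using box_subset_cbox by fastforce
      ultimately have "U \<subseteq> interior P" by (rule interior_maximal[rotated])
      moreover have "y \<in> U" using yb yG by (simp add: U_def)
      ultimately show False using yf by (auto simp: frontier_def)
    qed
  qed
  have strict: "G y < G (y + s *\<^sub>R One)" if "y \<in> K" "y + s *\<^sub>R One \<in> K" "0 < s" for y s
  proof -
    have y1: "(y,1) \<in> C" "(y + s *\<^sub>R One, 1) \<in> C" using that yK by auto
    have ge0: "0 \<le> y$i" for i using that(1) by (simp add: K_def mem_box_cart)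
    have "(\<Prod>i\<in>UNIV. y$i) < (\<Prod>i\<in>UNIV. (y + s *\<^sub>R One)$i)"
      by (rule prod_mono_strict[of undefined]) (use ge0 \<open>0 < s\<close> in \<open>auto intro: add_nonneg_pos\<close>)
    then have "mu y 1 < mu (y + s *\<^sub>R One) 1" by (simp add: mu_def)
    then show ?thesis using mono[OF y1] \<open>0 < s\<close> by (simp add: G_def)
  qed
  have compL: "compact L"
  proof -
    have "L = K \<inter> G -` {1/2}" unfolding L_def by auto
    moreover have "closed (K \<inter> G -` {1/2})"
      by (rule continuous_closed_preimage[OF contG]) (auto simp: K_def)
    ultimately have "closed L" by simp
    moreover have "bounded L" unfolding L_def K_def by (rule bounded_subset[OF bounded_cbox]) auto
    ultimately show ?thesis by (simp add: compact_eq_bounded_closed)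
  qed
  have lmL: "L \<in> lmeasurable" using compL by (rule lmeasurable_compact)
  have negL: "negligible L"
  proof -
    define c where "c k = 1 / (real k + 1)" for k :: nat
    define A where "A k = (+) (c k *\<^sub>R One) ` L" for k
    have c01: "0 < c k" "c k \<le> 1" for k by (auto simp: c_def)
    have nodup: False if "y \<in> L" "z \<in> L" "u < v" "u *\<^sub>R One + y = v *\<^sub>R (One::real^'m) + z" for y z u v
    proof -
      have "y = z + (v - u) *\<^sub>R One" using that(4) by (simp add: algebra_simps)
      then show False using strict[of z "v - u"] that unfolding L_def by auto
    qed
    have disj: "disjoint_family A"
      unfolding disjoint_family_on_def
    proof (intro ballI impI)
      fix j k :: nat assume "j \<noteq> k"
      then have "c j \<noteq> c k" by (auto simp: c_def)
      then show "A j \<inter> A k = {}"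
      proof -
        have False if "c j *\<^sub>R One + y = c k *\<^sub>R One + z" "y \<in> L" "z \<in> L" for y z
          using \<open>c j \<noteq> c k\<close> nodup[of y z "c j" "c k"] nodup[of z y "c k" "c j"] that
          by (auto simp: neq_iff)
        then show ?thesis unfolding A_def by blast
      qed
    qed
    have lmA: "A k \<in> lmeasurable" for k unfolding A_def by (rule measurable_translation[OF lmL])
    have mA: "measure lebesgue (A k) = measure lebesgue L" for k unfolding A_def by (rule measure_translation)
    define M where "M = measure lebesgue (cbox (0::real^'m) (2 *\<^sub>R One))"
    have Asub: "A k \<subseteq> cbox 0 (2 *\<^sub>R One)" for k
    proof
      fix w assume "w \<in> A k"
      then obtain y where y: "y \<in> L" "w = c k *\<^sub>R One + y" unfolding A_def by auto
      have yi: "0 \<le> y$i \<and> y$i \<le> 1" for i using y(1) by (simp add: L_def K_def mem_box_cart)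
      have "0 \<le> c k + y$i \<and> c k + y$i \<le> 2" for i using yi[of i] c01[of k] by linarith
      then show "w \<in> cbox 0 (2 *\<^sub>R One)" using y(2) c01[of k] by (simp add: mem_box_cart)
    qed
    have bound: "real N * measure lebesgue L \<le> M" for N
    proof -
      have "measure lebesgue (\<Union>k\<in>{..<N}. A k) = (\<Sum>k\<in>{..<N}. measure lebesgue (A k))"
      proof (rule measure_finite_Union)
        show "disjoint_family_on A {..<N}" using disj by (simp add: disjoint_family_on_def)
        show "\<And>i. i \<in> {..<N} \<Longrightarrow> emeasure lebesgue (A i) \<noteq> \<infinity>"
          using lmA fmeasurableD2 by (metis infinity_ennreal_def)
      qed (use lmA in auto)
      also have "\<dots> = real N * measure lebesgue L" by (simp add: mA)
      finally have eq: "measure lebesgue (\<Union>k\<in>{..<N}. A k) = real N * measure lebesgue L" .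
      have "measure lebesgue (\<Union>k\<in>{..<N}. A k) \<le> M"
        unfolding M_def by (rule measure_mono_fmeasurable) (use Asub lmA in auto)
      then show ?thesis using eq by simp
    qed
    have "measure lebesgue L = 0"
    proof (rule ccontr)
      assume "measure lebesgue L \<noteq> 0"
      then have mpos: "measure lebesgue L > 0" using measure_nonneg[of lebesgue L] by linarith
      obtain N :: nat where "M / measure lebesgue L < real N" using reals_Archimedean2 by blast
      then have "M < real N * measure lebesgue L" using mpos by (simp add: divide_less_eq)
      then show False using bound[of N] by simp
    qed
    then show ?thesis using lmL negligible_iff_measure0 by blast
  qed
  have jm: "jordan_measurable P"
    unfolding jordan_measurable_def
  proof
    show "bounded P" by (rule boundedP)
    show "negligible (frontier P)"
      by (rule negligible_subset[OF _ frontP]) (use negligible_frontier_interval negL in \<open>rule negligible_Un\<close>)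
  qed
  have mpos: "measure lebesgue P > 0"
  proof -
    define m where "m = CARD('m)"
    have m1: "real m \<ge> 1" unfolding m_def by simp
    define s where "s = 1 - 1 / (2 * (Bd + 1) * real m)"
    have d: "1 - s = 1 / (2 * (Bd + 1) * real m)" by (simp add: s_def)
    have dpos: "0 < 1 - s" using Bd0 m1 by (simp add: d)
    have dle: "1 - s \<le> 1/2"
    proof -
      have "1 \<le> (Bd + 1) * real m" using mult_mono[of 1 "Bd+1" 1 "real m"] Bd0 m1 by simp
      then have Y: "2 \<le> 2 * ((Bd + 1) * real m)" by linarith
      have "1 / (2 * ((Bd + 1) * real m)) \<le> 1 / 2"
        by (rule divide_left_mono[OF Y]) (use Bd0 m1 in auto)
      then show ?thesis unfolding d mult.assoc by assumption
    qed
    have s0: "0 \<le> s" using dle by simp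
    define Q where "Q = cbox (s *\<^sub>R (One::real^'m)) One"
    have QP: "Q \<subseteq> P"
    proof
      fix y assume "y \<in> Q"
      then have ys: "s \<le> y$i \<and> y$i \<le> 1" for i by (simp add: Q_def mem_box_cart)
      then have yK': "y \<in> K" using s0 by (auto simp: K_def mem_box_cart intro: order_trans)
      have "s ^ m \<le> (\<Prod>i\<in>UNIV. y$i)"
        using prod_mono[of UNIV "\<lambda>_. s" "\<lambda>i. y$i"] ys s0 by (simp add: m_def)
      moreover have "1 + real m * (s - 1) \<le> s ^ m"
        using Bernoulli_inequality[of "s - 1" m] s0 by simp
      ultimately have p: "1 - real m * (1 - s) \<le> mu y 1" by (simp add: mu_def algebra_simps)
      have "real m * (1 - s) = 1 / (2 * (Bd + 1))" using m1 by (simp add: d)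
      then have p2: "1 - mu y 1 \<le> 1 / (2 * (Bd + 1))" using p by simp
      have "mu One 1 = 1" by (simp add: mu_def)
      then have "1 - G y \<le> Bd * (1 - mu y 1)"
        using mono[of y 1 One 1] yK' OneC ys FOne by (simp add: yK G_def)
      also have "\<dots> \<le> Bd * (1 / (2 * (Bd + 1)))" using p2 Bd0 by (intro mult_left_mono) auto
      also have "\<dots> < 1/2" using Bd0 by (simp add: field_simps)
      finally have "1/2 \<le> G y" by simp
      then show "y \<in> P" using yK' Peq by auto
    qed
    have "One \<in> Q" unfolding Q_def using dpos by (simp add: mem_box_cart)
    then have "Q \<noteq> {}" by auto
    then have "measure lebesgue Q = (\<Prod>i\<in>UNIV. One$i - (s *\<^sub>R (One::real^'m))$i)"
      unfolding Q_def by (simp add: content_cbox_cart)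
    also have "\<dots> = (1 - s) ^ m" by (simp add: m_def)
    finally have "measure lebesgue Q > 0" using dpos by simp
    also have "measure lebesgue Q \<le> measure lebesgue P"
      by (rule measure_mono_fmeasurable[OF QP]) (use lmP in \<open>auto simp: Q_def\<close>)
    finally show ?thesis .
  qed
  show ?thesis using jm mpos unfolding P_def C_def by simp
qed

end
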